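(* Let $m,g>0$, $k\in\mathbb{N}$, $\gamma\in\mathbb{R}$, and let $(\psi_1,\psi_2)$ be a sufficiently smooth solution, decaying with its derivatives as $|x|\to\infty$, of $$i\partial_t\psi_1=\partial_x\psi_2-g(|\psi_1|^2-|\psi_2|^2)^k\psi_1+m\psi_1+i\gamma\psi_2,\qquad i\partial_t\psi_2=-\partial_x\psi_1+g(|\psi_1|^2-|\psi_2|^2)^k\psi_2-m\psi_2+i\gamma\psi_1.$$ Then the ($\gamma$-independent) energy $$E(t)=\frac12\int_{\mathbb{R}}\Big[\overline{\psi_1}\,\partial_x\psi_2-\overline{\psi_2}\,\partial_x\psi_1+m(|\psi_1|^2-|\psi_2|^2)-\frac{g}{k+1}\big(|\psi_1|^2-|\psi_2|^2\big)^{k+1}\Big]dx$$ is real and conserved: $dE/dt=0$, for every value of $\gamma$.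
   Context: This is the $\mathcal{P}\mathcal{T}$-symmetric 1D Soler model (gain–loss term $i\gamma\sigma_1\psi$ with $\sigma_1$ the first Pauli matrix). *)

theory Defs
  imports "HOL-Analysis.Analysis"
begin

definition jcont :: "(real \<Rightarrow> real \<Rightarrow> complex) \<Rightarrow> bool" where
  "jcont v \<longleftrightarrow> continuous_on UNIV (\<lambda>z. v (fst z) (snd z))"

definition decays :: "(real \<Rightarrow> real \<Rightarrow> complex) \<Rightarrow> bool" where
  "decays v \<longleftrightarrow> (\<forall>T. \<exists>C. \<forall>t x. \<bar>t\<bar> \<le> T \<longrightarrow> norm (v t x) \<le> C / (1 + x\<^sup>2))"

definition smooth_decaying :: "(real \<Rightarrow> real \<Rightarrow> complex) \<Rightarrow> bool" where
  "smooth_decaying u \<longleftrightarrow>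
    (\<exists>ut ux utt utx uxt uxx.
      (\<forall>t x. ((\<lambda>s. u s x) has_vector_derivative ut t x) (at t)) \<and>
      (\<forall>t x. ((\<lambda>y. u t y) has_vector_derivative ux t x) (at x)) \<and>
      (\<forall>t x. ((\<lambda>s. ut s x) has_vector_derivative utt t x) (at t)) \<and>
      (\<forall>t x. ((\<lambda>y. ut t y) has_vector_derivative utx t x) (at x)) \<and>
      (\<forall>t x. ((\<lambda>s. ux s x) has_vector_derivative uxt t x) (at t)) \<and>
      (\<forall>t x. ((\<lambda>y. ux t y) has_vector_derivative uxx t x) (at x)) \<and>
      (\<forall>v\<in>{u, ut, ux, utt, utx, uxt, uxx}. jcont v \<and> decays v))"

definition dt :: "(real \<Rightarrow> real \<Rightarrow> complex) \<Rightarrow> real \<Rightarrow> real \<Rightarrow> complex" where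
  "dt u t x = vector_derivative (\<lambda>s. u s x) (at t)"

definition dx :: "(real \<Rightarrow> real \<Rightarrow> complex) \<Rightarrow> real \<Rightarrow> real \<Rightarrow> complex" where
  "dx u t x = vector_derivative (\<lambda>y. u t y) (at x)"

definition rho :: "(real \<Rightarrow> real \<Rightarrow> complex) \<Rightarrow> (real \<Rightarrow> real \<Rightarrow> complex) \<Rightarrow> real \<Rightarrow> real \<Rightarrow> real" where
  "rho p1 p2 t x = (cmod (p1 t x))\<^sup>2 - (cmod (p2 t x))\<^sup>2"

definition soler_PT_solution ::
  "real \<Rightarrow> real \<Rightarrow> nat \<Rightarrow> real \<Rightarrow> (real \<Rightarrow> real \<Rightarrow> complex) \<Rightarrow> (real \<Rightarrow> real \<Rightarrow> complex) \<Rightarrow> bool" where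
  "soler_PT_solution m g k \<gamma> p1 p2 \<longleftrightarrow>
    (\<forall>t x.
      \<i> * dt p1 t x = dx p2 t x - of_real (g * (rho p1 p2 t x) ^ k) * p1 t x
                      + of_real m * p1 t x + \<i> * of_real \<gamma> * p2 t x \<and>
      \<i> * dt p2 t x = - dx p1 t x + of_real (g * (rho p1 p2 t x) ^ k) * p2 t x
                      - of_real m * p2 t x + \<i> * of_real \<gamma> * p1 t x)"

definition soler_energy ::
  "real \<Rightarrow> real \<Rightarrow> nat \<Rightarrow> (real \<Rightarrow> real \<Rightarrow> complex) \<Rightarrow> (real \<Rightarrow> real \<Rightarrow> complex) \<Rightarrow> real \<Rightarrow> complex" where
  "soler_energy m g k p1 p2 t =
     (1/2) * integral UNIV (\<lambda>x.
        cnj (p1 t x) * dx p2 t x - cnj (p2 t x) * dx p1 t x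
        + of_real (m * rho p1 p2 t x)
        - of_real (g / (real k + 1) * (rho p1 p2 t x) ^ (k + 1)))"

end

theory Submission
  imports Defs "HOL-Real_Asymp.Real_Asymp"
begin

lemma int_w: "(\<lambda>x::real. 1/(1+x^2)) integrable_on UNIV"
proof -
  define f where "f k x = (if x \<in> {-real k..real k} then 1/(1+x^2) else 0)" for k::nat and x::real
  have hk: "((\<lambda>x. 1/(1+x^2)) has_integral (arctan (real k) - arctan (- real k))) {-real k..real k}" for k
  proof (rule fundamental_theorem_of_calculus)
    show "- real k \<le> real k" by simp
    fix x :: real
    have "(arctan has_real_derivative inverse (1 + x\<^sup>2)) (at x within {-real k..real k})"
      by (rule DERIV_subset[OF DERIV_arctan]) auto
    then show "(arctan has_vector_derivative 1 / (1 + x\<^sup>2)) (at x within {- real k..real k})"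
      by (simp add: has_real_derivative_iff_has_vector_derivative divide_inverse)
  qed
  have fi: "(f k has_integral (arctan (real k) - arctan (- real k))) UNIV" for k
    unfolding f_def has_integral_restrict_UNIV by (rule hk)
  have "(\<lambda>x::real. 1/(1+x^2)) integrable_on UNIV \<and> (\<lambda>k. integral UNIV (f k)) \<longlonglongrightarrow> integral UNIV (\<lambda>x::real. 1/(1+x^2))"
  proof (rule monotone_convergence_increasing)
    show "f k integrable_on UNIV" for k using fi by blast
    show "f k x \<le> f (Suc k) x" for k x by (auto simp: f_def)
    show "(\<lambda>k. f k x) \<longlonglongrightarrow> 1/(1+x^2)" for x
    proof (rule tendsto_eventually)
      obtain N :: nat where "\<bar>x\<bar> \<le> real N" using real_arch_simple by blast
      then show "\<forall>\<^sub>F k in sequentially. f k x = 1/(1+x^2)"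
        by (auto simp: f_def eventually_sequentially intro!: exI[of _ N])
    qed
    show "bounded (range (\<lambda>k. integral UNIV (f k)))"
    proof (rule boundedI[of _ pi])
      fix y assume "y \<in> range (\<lambda>k. integral UNIV (f k))"
      then obtain k where "y = arctan (real k) - arctan (- real k)" using fi integral_unique by blast
      moreover have "\<bar>arctan (real k) - arctan (- real k)\<bar> \<le> pi"
        using arctan_bounded[of "real k"] arctan_bounded[of "- real k"] by linarith
      ultimately show "norm y \<le> pi" by simp
    qed
  qed
  then show ?thesis by blast
qed

lemma int_wC: "(\<lambda>x::real. C/(1+x^2)) integrable_on UNIV"
  using integrable_on_cmult_left[OF int_w, of C] by simp

lemma dec_int:
  fixes f :: "real \<Rightarrow> complex"
  assumes "continuous_on UNIV f" "\<And>x. norm (f x) \<le> C/(1+x^2)"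
  shows "f integrable_on UNIV"
  by (rule measurable_bounded_by_integrable_imp_integrable[OF _ int_wC])
     (auto intro: continuous_imp_measurable_on_sets_lebesgue assms)

lemma dec_lim:
  fixes f :: "real \<Rightarrow> complex"
  assumes "f integrable_on UNIV" "\<And>x. norm (f x) \<le> C/(1+x^2)"
  shows "(\<lambda>n. integral {-real n..real n} f) \<longlonglongrightarrow> integral UNIV f"
proof -
  define fk where "fk k x = (if x \<in> {-real k..real k} then f x else 0)" for k::nat and x
  have "(\<lambda>k. integral UNIV (fk k)) \<longlonglongrightarrow> integral UNIV f"
  proof (rule dominated_convergence(2)[OF _ int_wC])
    show "fk k integrable_on UNIV" for k
      unfolding fk_def integrable_restrict_UNIV
      by (rule integrable_on_subinterval[OF assms(1)]) auto
    show "norm (fk k x) \<le> C/(1+x^2)" for k x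
      using assms(2)[of x] order_trans[OF norm_ge_zero assms(2)[of x]] by (auto simp: fk_def)
    show "(\<lambda>k. fk k x) \<longlonglongrightarrow> f x" for x
    proof (rule tendsto_eventually)
      obtain N :: nat where "\<bar>x\<bar> \<le> real N" using real_arch_simple by blast
      then show "\<forall>\<^sub>F k in sequentially. fk k x = f x"
        by (auto simp: fk_def eventually_sequentially intro!: exI[of _ N])
    qed
  qed
  then show ?thesis unfolding fk_def integral_restrict_UNIV .
qed

lemma int_deriv_zero:
  fixes F f :: "real \<Rightarrow> complex"
  assumes "\<And>x. (F has_vector_derivative f x) (at x)" "continuous_on UNIV f"
    "\<And>x. norm (f x) \<le> C/(1+x^2)" "\<And>x. norm (F x) \<le> D/(1+x^2)"
  shows "integral UNIV f = 0"
proof -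
  have L: "(\<lambda>n. integral {-real n..real n} f) \<longlonglongrightarrow> integral UNIV f"
    by (rule dec_lim[OF dec_int[OF assms(2,3)] assms(3)])
  have eq: "integral {-real n..real n} f = F (real n) - F (- real n)" for n
  proof (rule integral_unique, rule fundamental_theorem_of_calculus)
    show "(F has_vector_derivative f x) (at x within {- real n..real n})" for x
      using assms(1) has_vector_derivative_at_within by blast
  qed simp
  have "(\<lambda>n. integral {-real n..real n} f) \<longlonglongrightarrow> 0"
  proof (rule Lim_null_comparison)
    show "\<forall>\<^sub>F n in sequentially. norm (integral {-real n..real n} f) \<le> 2*D/(1+(real n)^2)"
    proof (rule always_eventually, rule allI)
      fix n
      have "norm (F (real n) - F (- real n)) \<le> norm (F (real n)) + norm (F (- real n))"
        by (rule norm_triangle_ineq4)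
      also have "\<dots> \<le> D/(1+(real n)^2) + D/(1+(- real n)^2)" using assms(4) by (intro add_mono)
      finally show "norm (integral {-real n..real n} f) \<le> 2*D/(1+(real n)^2)" by (simp add: eq)
    qed
    show "(\<lambda>n. 2*D/(1+(real n)^2)) \<longlonglongrightarrow> 0" by real_asymp
  qed
  from LIMSEQ_unique[OF L this] show ?thesis .
qed

lemma jc_x: "continuous_on UNIV (\<lambda>z. v (fst z) (snd z)) \<Longrightarrow> continuous_on S (v t)"
  by (rule continuous_on_compose2[of UNIV "\<lambda>z. v (fst z) (snd z)" S "\<lambda>y. (t,y)", simplified])
     (auto intro: continuous_intros)

lemma jc_t: "continuous_on UNIV (\<lambda>z. v (fst z) (snd z)) \<Longrightarrow> continuous_on S (\<lambda>s. v s x)"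
  by (rule continuous_on_compose2[of UNIV "\<lambda>z. v (fst z) (snd z)" S "\<lambda>s. (s,x)", simplified])
     (auto intro: continuous_intros)

lemma jc_split: "continuous_on UNIV (\<lambda>z. v (fst z) (snd z)) \<Longrightarrow> continuous_on S (\<lambda>(a,b). v a b)"
  unfolding case_prod_unfold by (erule continuous_on_subset) simp

lemma jc_swap: "continuous_on UNIV (\<lambda>z. v (fst z) (snd z)) \<Longrightarrow> continuous_on S (\<lambda>(a,b). v b a)"
  unfolding case_prod_unfold
  by (rule continuous_on_compose2[of UNIV "\<lambda>z. v (fst z) (snd z)" S "\<lambda>z. (snd z, fst z)", simplified])
     (simp_all add: continuous_on_Pair continuous_on_fst continuous_on_snd continuous_on_id)

lemma ftc:
  fixes f :: "real \<Rightarrow> 'a::banach"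
  assumes "a \<le> b" "\<And>s. (f has_vector_derivative f' s) (at s)"
  shows "(f' has_integral (f b - f a)) {a..b}"
  by (rule fundamental_theorem_of_calculus[OF assms(1)]) (rule has_vector_derivative_at_within[OF assms(2)])

lemma param_int:
  fixes v :: "real \<Rightarrow> real \<Rightarrow> complex"
  assumes "continuous_on UNIV (\<lambda>z. v (fst z) (snd z))"
  shows "(\<lambda>s. integral {a..b} (v s)) integrable_on {c..d}"
proof -
  have "continuous_on {c..d} (\<lambda>s. integral (cbox a b) (v s))"
    by (rule integral_continuous_on_param) (rule jc_split[OF assms])
  then show ?thesis by (simp add: cbox_interval integrable_continuous_interval)
qed

lemma clairaut:
  fixes u ut ux utx uxt :: "real \<Rightarrow> real \<Rightarrow> complex"
  assumes dt: "\<And>t x. ((\<lambda>s. u s x) has_vector_derivative ut t x) (at t)"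
   and dx: "\<And>t x. ((\<lambda>y. u t y) has_vector_derivative ux t x) (at x)"
   and dtx: "\<And>t x. ((\<lambda>y. ut t y) has_vector_derivative utx t x) (at x)"
   and dxt: "\<And>t x. ((\<lambda>s. ux s x) has_vector_derivative uxt t x) (at t)"
   and c1: "continuous_on UNIV (\<lambda>z. utx (fst z) (snd z))"
   and c2: "continuous_on UNIV (\<lambda>z. uxt (fst z) (snd z))"
  shows "uxt t x = utx t x"
proof (rule ccontr)
  define D where "D \<tau> y = uxt \<tau> y - utx \<tau> y" for \<tau> y
  have cD: "continuous_on UNIV (\<lambda>z. D (fst z) (snd z))"
    unfolding D_def by (intro continuous_intros c1 c2)
  have key: "integral {t0..t1} (\<lambda>\<tau>. integral {x0..x1} (D \<tau>)) = 0"
    if le: "t0 \<le> t1" "x0 \<le> x1" for t0 t1 x0 x1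
  proof -
    define Q where "Q = u t1 x1 - u t0 x1 - (u t1 x0 - u t0 x0)"
    have i1: "integral {x0..x1} (utx \<tau>) = ut \<tau> x1 - ut \<tau> x0" for \<tau>
      by (rule integral_unique, rule ftc[OF le(2) dtx])
    have "((\<lambda>\<tau>. ut \<tau> x1 - ut \<tau> x0) has_integral Q) {t0..t1}"
      unfolding Q_def by (intro has_integral_diff ftc[OF le(1) dt])
    then have A: "integral {t0..t1} (\<lambda>\<tau>. integral {x0..x1} (utx \<tau>)) = Q"
      by (simp add: i1 integral_unique)
    have i2: "integral {t0..t1} (\<lambda>\<tau>. uxt \<tau> y) = ux t1 y - ux t0 y" for y
      by (rule integral_unique, rule ftc[OF le(1) dxt])
    have "((\<lambda>y. ux t1 y - ux t0 y) has_integral (u t1 x1 - u t1 x0 - (u t0 x1 - u t0 x0))) {x0..x1}"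
      by (intro has_integral_diff ftc[OF le(2) dx])
    then have B0: "integral {x0..x1} (\<lambda>y. integral {t0..t1} (\<lambda>\<tau>. uxt \<tau> y)) = Q"
      by (simp add: i2 integral_unique Q_def algebra_simps)
    have sw: "integral (cbox x0 x1) (\<lambda>y. integral (cbox t0 t1) (\<lambda>\<tau>. uxt \<tau> y)) =
              integral (cbox t0 t1) (\<lambda>\<tau>. integral (cbox x0 x1) (\<lambda>y. uxt \<tau> y))"
      by (rule integral_swap_continuous[where f="\<lambda>y \<tau>. uxt \<tau> y"]) (rule jc_swap[OF c2])
    have B: "integral {t0..t1} (\<lambda>\<tau>. integral {x0..x1} (uxt \<tau>)) = Q"
      using B0 sw by (simp add: cbox_interval)
    have "integral {t0..t1} (\<lambda>\<tau>. integral {x0..x1} (D \<tau>)) =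
          integral {t0..t1} (\<lambda>\<tau>. integral {x0..x1} (uxt \<tau>) - integral {x0..x1} (utx \<tau>))"
      unfolding D_def
      by (intro integral_cong integral_diff integrable_continuous_interval jc_x[OF c1] jc_x[OF c2])
    also have "\<dots> = integral {t0..t1} (\<lambda>\<tau>. integral {x0..x1} (uxt \<tau>)) - integral {t0..t1} (\<lambda>\<tau>. integral {x0..x1} (utx \<tau>))"
      by (intro integral_diff param_int c1 c2)
    also have "\<dots> = 0" using A B by simp
    finally show ?thesis .
  qed
  assume ne: "uxt t x \<noteq> utx t x"
  define w where "w = cnj (D t x)"
  define E where "E \<tau> y = w * D \<tau> y" for \<tau> y
  have cE: "continuous_on UNIV (\<lambda>z. E (fst z) (snd z))"
    unfolding E_def by (intro continuous_intros cD)
  have "E t x = of_real ((cmod (D t x))^2)"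
    unfolding complex_norm_square by (simp add: E_def w_def mult.commute)
  then have pos: "Re (E t x) > 0"
    using ne by (simp add: D_def)
  define c where "c = Re (E t x) / 2"
  have c0: "c > 0" using pos by (simp add: c_def)
  obtain \<delta> where d0: "\<delta> > 0" and d: "\<And>z. dist z (t,x) < \<delta> \<Longrightarrow> dist (E (fst z) (snd z)) (E t x) < c"
    using cE c0 unfolding continuous_on_iff by (metis UNIV_I fst_conv snd_conv)
  define \<eta> where "\<eta> = \<delta>/3"
  have e0: "\<eta> > 0" using d0 by (simp add: \<eta>_def)
  have lower: "Re (E \<tau> y) \<ge> c" if "\<tau> \<in> {t..t+\<eta>}" "y \<in> {x..x+\<eta>}" for \<tau> y
  proof -
    have "dist (\<tau>,y) (t,x) = norm (\<tau> - t, y - x)" by (simp add: dist_norm)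
    also have "\<dots> \<le> norm (\<tau> - t) + norm (y - x)" by (rule norm_Pair_le)
    also have "\<dots> < \<delta>" using that d0 by (auto simp: \<eta>_def)
    finally have "dist (E \<tau> y) (E t x) < c" using d[of "(\<tau>,y)"] by simp
    then have "\<bar>Re (E \<tau> y) - Re (E t x)\<bar> < c"
      by (metis abs_Re_le_cmod dist_norm minus_complex.sel(1) order_le_less_trans)
    then show ?thesis unfolding c_def by linarith
  qed
  have inner: "c * \<eta> \<le> Re (integral {x..x+\<eta>} (E \<tau>))" if "\<tau> \<in> {t..t+\<eta>}" for \<tau>
  proof -
    have "c * Henstock_Kurzweil_Integration.content (cbox x (x+\<eta>)) \<le> integral (cbox x (x+\<eta>)) (E \<tau>) \<bullet> 1"
      by (rule integral_component_lbound)
         (use lower that e0 in \<open>auto simp: cbox_interval intro!: integrable_continuous_interval jc_x[OF cE]\<close>)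
    then show ?thesis using e0 by (simp add: cbox_interval)
  qed
  have "(c * \<eta>) * Henstock_Kurzweil_Integration.content (cbox t (t+\<eta>)) \<le> integral (cbox t (t+\<eta>)) (\<lambda>\<tau>. integral {x..x+\<eta>} (E \<tau>)) \<bullet> 1"
    by (rule integral_component_lbound)
       (use inner in \<open>auto simp: cbox_interval intro!: param_int[OF cE]\<close>)
  moreover have "integral {t..t+\<eta>} (\<lambda>\<tau>. integral {x..x+\<eta>} (E \<tau>)) = 0"
    using key[of t "t+\<eta>" x "x+\<eta>"] e0 unfolding E_def[abs_def] by simp
  ultimately have "c * \<eta> * \<eta> \<le> 0" using e0 by (simp add: cbox_interval)
  then show False using c0 e0 by (simp add: mult_le_0_iff)
qed

lemma hvd_power:
  fixes f :: "real \<Rightarrow> 'a::real_normed_field"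
  assumes "(f has_vector_derivative f') (at x within S)"
  shows "((\<lambda>x. f x ^ n) has_vector_derivative (of_nat n * f' * f x ^ (n - 1))) (at x within S)"
  using has_derivative_power[OF assms[unfolded has_vector_derivative_def]] unfolding has_vector_derivative_def
  by (rule has_derivative_eq_rhs) (simp add: fun_eq_iff scaleR_conv_of_real algebra_simps)

definition RR :: "(real \<Rightarrow> real \<Rightarrow> complex) \<Rightarrow> (real \<Rightarrow> real \<Rightarrow> complex) \<Rightarrow> real \<Rightarrow> real \<Rightarrow> complex" where
  "RR a b t x = a t x * cnj (a t x) - b t x * cnj (b t x)"

lemma cnj_RR[simp]: "cnj (RR a b t x) = RR a b t x"
  by (simp add: RR_def mult.commute)

definition hh where
  "hh m g k a b aX bX t x = cnj (a t x) * bX t x - cnj (b t x) * aX t x + of_real m * RR a b t x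
      - of_real (g / (real k + 1)) * RR a b t x ^ (k + 1)"

definition JJ where
  "JJ \<gamma> a b aT bT t x = cnj (a t x) * bT t x - cnj (b t x) * aT t x - of_real \<gamma> * RR a b t x"

definition KK where
  "KK a b t x = cnj (a t x) * b t x - a t x * cnj (b t x)"

definition KX where
  "KX a b aX bX t x = cnj (aX t x) * b t x + cnj (a t x) * bX t x - (aX t x * cnj (b t x) + a t x * cnj (bX t x))"

definition D2 where
  "D2 a b aT bT t x = aT t x * cnj (a t x) + a t x * cnj (aT t x) - (bT t x * cnj (b t x) + b t x * cnj (bT t x))"

definition hd where
  "hd m g k a b aT bT aX bX aM bM t x = cnj (aT t x) * bX t x + cnj (a t x) * bM t x - (cnj (bT t x) * aX t x + cnj (b t x) * aM t x)
     + of_real m * D2 a b aT bT t x - of_real g * RR a b t x ^ k * D2 a b aT bT t x"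

lemma key_alg:
 fixes a ca b cb ax cax bx cbx aT caT bT cbT axt bxt V m \<gamma> i :: complex
 assumes i: "i*i = -1"
  and p1: "i*aT = bx - V*a + m*a + i*\<gamma>*b"
  and p1c: "-i*caT = cbx - V*ca + m*ca - i*\<gamma>*cb"
  and p2: "i*bT = -ax + V*b - m*b + i*\<gamma>*a"
  and p2c: "-i*cbT = -cax + V*cb - m*cb - i*\<gamma>*ca"
 shows "caT*bx + ca*bxt - (cbT*ax + cb*axt) + m*(aT*ca + a*caT - (bT*cb + b*cbT)) - V*(aT*ca + a*caT - (bT*cb + b*cbT))
   = cax*bT + ca*bxt - (cbx*aT + cb*axt) - \<gamma>*(ax*ca + a*cax - (bx*cb + b*cbx))"
proof -
  have e1: "aT = -i*(bx - V*a + m*a + i*\<gamma>*b)" using p1 i by (metis (no_types, lifting) mult.assoc mult_minus_left mult_1 minus_minus)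
  have e2: "caT = i*(cbx - V*ca + m*ca - i*\<gamma>*cb)" using p1c i
    by (metis (no_types, lifting) mult.assoc mult_minus_left mult_1 minus_minus mult_minus_right)
  have e3: "bT = -i*(-ax + V*b - m*b + i*\<gamma>*a)" using p2 i by (metis (no_types, lifting) mult.assoc mult_minus_left mult_1 minus_minus)
  have e4: "cbT = i*(-cax + V*cb - m*cb - i*\<gamma>*ca)" using p2c i
    by (metis (no_types, lifting) mult.assoc mult_minus_left mult_1 minus_minus mult_minus_right)
  show ?thesis unfolding e1 e2 e3 e4 using i by algebra
qed

locale sol =
  fixes m g \<gamma> :: real and k :: nat and a aT aX aM b bT bX bM :: "real \<Rightarrow> real \<Rightarrow> complex"
  assumes da_t: "\<And>t x. ((\<lambda>s. a s x) has_vector_derivative aT t x) (at t)"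
    and da_x: "\<And>t x. ((\<lambda>y. a t y) has_vector_derivative aX t x) (at x)"
    and daX_t: "\<And>t x. ((\<lambda>s. aX s x) has_vector_derivative aM t x) (at t)"
    and daT_x: "\<And>t x. ((\<lambda>y. aT t y) has_vector_derivative aM t x) (at x)"
    and db_t: "\<And>t x. ((\<lambda>s. b s x) has_vector_derivative bT t x) (at t)"
    and db_x: "\<And>t x. ((\<lambda>y. b t y) has_vector_derivative bX t x) (at x)"
    and dbX_t: "\<And>t x. ((\<lambda>s. bX s x) has_vector_derivative bM t x) (at t)"
    and dbT_x: "\<And>t x. ((\<lambda>y. bT t y) has_vector_derivative bM t x) (at x)"
    and ca: "continuous_on UNIV (\<lambda>z. a (fst z) (snd z))"
    and caT: "continuous_on UNIV (\<lambda>z. aT (fst z) (snd z))"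
    and caX: "continuous_on UNIV (\<lambda>z. aX (fst z) (snd z))"
    and caM: "continuous_on UNIV (\<lambda>z. aM (fst z) (snd z))"
    and cb: "continuous_on UNIV (\<lambda>z. b (fst z) (snd z))"
    and cbT: "continuous_on UNIV (\<lambda>z. bT (fst z) (snd z))"
    and cbX: "continuous_on UNIV (\<lambda>z. bX (fst z) (snd z))"
    and cbM: "continuous_on UNIV (\<lambda>z. bM (fst z) (snd z))"
    and dec: "decays a" "decays aT" "decays aX" "decays b" "decays bT" "decays bX"
    and pde1: "\<And>t x. \<i> * aT t x = bX t x - of_real g * RR a b t x ^ k * a t x + of_real m * a t x + \<i> * of_real \<gamma> * b t x"
    and pde2: "\<And>t x. \<i> * bT t x = - aX t x + of_real g * RR a b t x ^ k * b t x - of_real m * b t x + \<i> * of_real \<gamma> * a t x"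
begin

abbreviation "h \<equiv> hh m g k a b aX bX"
abbreviation "J \<equiv> JJ \<gamma> a b aT bT"
abbreviation "H \<equiv> hd m g k a b aT bT aX bX aM bM"

lemma dh_t: "((\<lambda>s. h s x) has_vector_derivative H t x) (at t)"
proof -
  have c: "of_real (g / (real k + 1)) * (of_nat (k+1) :: complex) = of_real g"
  proof -
    have e: "(of_nat (k+1) :: complex) = of_real (real k + 1)" by simp
    have "g / (real k + 1) * (real k + 1) = g" by simp
    then have "of_real (g/(real k+1)) * of_real (real k + 1) = (of_real g :: complex)" by (metis of_real_mult)
    then show ?thesis by (simp only: e)
  qed
  have dR: "((\<lambda>s. RR a b s x) has_vector_derivative D2 a b aT bT t x) (at t)"
    unfolding RR_def D2_def
    apply (rule has_vector_derivative_eq_rhs)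
     apply (rule derivative_eq_intros da_t db_t refl)+
    by (simp add: algebra_simps)
  show ?thesis
    unfolding hh_def hd_def
    apply (rule has_vector_derivative_eq_rhs)
     apply (rule derivative_eq_intros da_t db_t daX_t dbX_t dR hvd_power refl)+
    unfolding c[symmetric] by (simp add: algebra_simps del: of_real_divide of_nat_Suc)
qed

lemma dR_x: "((\<lambda>y. RR a b t y) has_vector_derivative D2 a b aX bX t x) (at x)"
    unfolding RR_def D2_def
    apply (rule has_vector_derivative_eq_rhs)
     apply (rule derivative_eq_intros da_x db_x refl)+
    by (simp add: algebra_simps)

lemma JX_eq: "cnj (aX t x) * bT t x + cnj (a t x) * bM t x - (cnj (bX t x) * aT t x + cnj (b t x) * aM t x)
      - of_real \<gamma> * D2 a b aX bX t x = H t x"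
proof -
  have p1c: "- \<i> * cnj (aT t x) = cnj (bX t x) - of_real g * RR a b t x ^ k * cnj (a t x) + of_real m * cnj (a t x) - \<i> * of_real \<gamma> * cnj (b t x)"
    using arg_cong[where f=cnj, OF pde1[of t x]] by simp
  have p2c: "- \<i> * cnj (bT t x) = - cnj (aX t x) + of_real g * RR a b t x ^ k * cnj (b t x) - of_real m * cnj (b t x) - \<i> * of_real \<gamma> * cnj (a t x)"
    using arg_cong[where f=cnj, OF pde2[of t x]] by simp
  show ?thesis
    using key_alg[where i="\<i>" and aT="aT t x" and caT="cnj (aT t x)" and bT="bT t x" and cbT = "cnj (bT t x)"
       and a="a t x" and ca="cnj (a t x)" and b = "b t x" and cb="cnj(b t x)" and ax="aX t x" and cax="cnj (aX t x)"
       and bx = "bX t x" and cbx = "cnj (bX t x)" and axt="aM t x" and bxt="bM t x"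
       and V="of_real g * RR a b t x ^ k" and m="of_real m" and \<gamma>="of_real \<gamma>", OF _ pde1 p1c pde2 p2c]
    by (simp add: hd_def D2_def)
qed

lemma dJ_x: "((\<lambda>y. J t y) has_vector_derivative H t x) (at x)"
proof -
  have "((\<lambda>y. J t y) has_vector_derivative (cnj (aX t x) * bT t x + cnj (a t x) * bM t x - (cnj (bX t x) * aT t x + cnj (b t x) * aM t x)
      - of_real \<gamma> * D2 a b aX bX t x)) (at x)"
    unfolding JJ_def
    apply (rule has_vector_derivative_eq_rhs)
     apply (rule derivative_eq_intros da_x db_x daT_x dbT_x dR_x refl)+
    by (simp add: algebra_simps)
  then show ?thesis by (simp only: JX_eq)
qed

end

definition DB :: "real \<Rightarrow> (real \<Rightarrow> real \<Rightarrow> complex) \<Rightarrow> bool" where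
  "DB T f \<longleftrightarrow> (\<exists>C. \<forall>t x. \<bar>t\<bar> \<le> T \<longrightarrow> norm (f t x) \<le> C/(1+x^2))"

lemma DB_decays: "decays f \<Longrightarrow> DB T f"
  unfolding decays_def DB_def by blast

lemma DB_nonneg: "norm p \<le> C/(1+(x::real)^2) \<Longrightarrow> 0 \<le> C"
proof -
  assume "norm p \<le> C/(1+x^2)"
  then have "0 \<le> C/(1+x^2)" using norm_ge_zero order_trans by blast
  moreover have "1+x^2 > 0" by (simp add: add_pos_nonneg)
  ultimately show ?thesis by (simp add: zero_le_divide_iff)
qed

lemma DB_le_const: "norm p \<le> C/(1+(x::real)^2) \<Longrightarrow> norm p \<le> C"
proof -
  assume h: "norm p \<le> C/(1+x^2)"
  have "C/(1+x^2) \<le> C/1" using DB_nonneg[OF h] by (intro divide_left_mono) (auto simp: add_pos_nonneg)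
  with h show ?thesis by linarith
qed

lemma pm: "norm (p::complex) \<le> A/(1+(x::real)^2) \<Longrightarrow> norm (q::complex) \<le> B/(1+x^2) \<Longrightarrow> norm (p*q) \<le> (A*B)/(1+x^2)"
proof -
  assume hp: "norm p \<le> A/(1+x^2)" and hq: "norm q \<le> B/(1+x^2)"
  have "norm (p*q) = norm p * norm q" by (simp add: norm_mult)
  also have "\<dots> \<le> A * (B/(1+x^2))" using DB_le_const[OF hp] hq DB_nonneg[OF hp] by (intro mult_mono) auto
  finally show ?thesis by simp
qed

lemma DB_add[intro]: "DB T f \<Longrightarrow> DB T g \<Longrightarrow> DB T (\<lambda>t x. f t x + g t x)"
proof -
  assume "DB T f" "DB T g"
  then obtain A B where A: "\<And>t x. \<bar>t\<bar> \<le> T \<Longrightarrow> norm (f t x) \<le> A/(1+x^2)"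
    and B: "\<And>t x. \<bar>t\<bar> \<le> T \<Longrightarrow> norm (g t x) \<le> B/(1+x^2)" unfolding DB_def by blast
  show ?thesis unfolding DB_def
  proof (intro exI allI impI)
    fix t x assume "\<bar>t\<bar> \<le> T"
    then have "norm (f t x + g t x) \<le> A/(1+x^2) + B/(1+x^2)"
      using A B norm_triangle_le add_mono by blast
    then show "norm (f t x + g t x) \<le> (A+B)/(1+x^2)" by (simp add: add_divide_distrib)
  qed
qed

lemma DB_diff[intro]: "DB T f \<Longrightarrow> DB T g \<Longrightarrow> DB T (\<lambda>t x. f t x - g t x)"
proof -
  assume "DB T f" "DB T g"
  then obtain A B where A: "\<And>t x. \<bar>t\<bar> \<le> T \<Longrightarrow> norm (f t x) \<le> A/(1+x^2)"
    and B: "\<And>t x. \<bar>t\<bar> \<le> T \<Longrightarrow> norm (g t x) \<le> B/(1+x^2)" unfolding DB_def by blast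
  show ?thesis unfolding DB_def
  proof (intro exI allI impI)
    fix t x assume "\<bar>t\<bar> \<le> T"
    then have "norm (f t x - g t x) \<le> A/(1+x^2) + B/(1+x^2)"
      using A B norm_triangle_le_diff add_mono by blast
    then show "norm (f t x - g t x) \<le> (A+B)/(1+x^2)" by (simp add: add_divide_distrib)
  qed
qed

lemma DB_cmult[intro]: "DB T g \<Longrightarrow> DB T (\<lambda>t x. c * g t x)"
proof -
  assume "DB T g"
  then obtain B where B: "\<And>t x. \<bar>t\<bar> \<le> T \<Longrightarrow> norm (g t x) \<le> B/(1+x^2)" unfolding DB_def by blast
  show ?thesis unfolding DB_def
  proof (intro exI allI impI)
    fix t x assume "\<bar>t\<bar> \<le> T"
    then have "norm c * norm (g t x) \<le> norm c * (B/(1+x^2))"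
      by (intro mult_left_mono B) auto
    then have "norm (c * g t x) \<le> norm c * (B/(1+x^2))" by (simp add: norm_mult)
    then show "norm (c * g t x) \<le> (norm c * B)/(1+x^2)" by simp
  qed
qed

lemma DB_mult[intro]: "DB T f \<Longrightarrow> DB T g \<Longrightarrow> DB T (\<lambda>t x. f t x * g t x)"
proof -
  assume "DB T f" "DB T g"
  then obtain A B where A: "\<And>t x. \<bar>t\<bar> \<le> T \<Longrightarrow> norm (f t x) \<le> A/(1+x^2)"
    and B: "\<And>t x. \<bar>t\<bar> \<le> T \<Longrightarrow> norm (g t x) \<le> B/(1+x^2)" unfolding DB_def by blast
  show ?thesis unfolding DB_def using A B pm by blast
qed

lemma DB_cnj[intro]: "DB T f \<Longrightarrow> DB T (\<lambda>t x. cnj (f t x))"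
  unfolding DB_def by simp

lemma DB_pow[intro]: "DB T f \<Longrightarrow> DB T (\<lambda>t x. f t x ^ (n+1))"
proof -
  assume "DB T f"
  then obtain A where A: "\<And>t x. \<bar>t\<bar> \<le> T \<Longrightarrow> norm (f t x) \<le> A/(1+x^2)" unfolding DB_def by blast
  show ?thesis unfolding DB_def
  proof (intro exI allI impI)
    fix t x assume t: "\<bar>t\<bar> \<le> T"
    have "norm (f t x ^ (n+1)) = norm (f t x) ^ n * norm (f t x)" by (simp add: norm_mult norm_power)
    also have "\<dots> \<le> A ^ n * (A/(1+x^2))"
      using A[OF t] DB_le_const[OF A[OF t]] DB_nonneg[OF A[OF t]] by (intro mult_mono power_mono) auto
    finally show "norm (f t x ^ (n+1)) \<le> (A^n * A)/(1+x^2)" by simp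
  qed
qed

lemma DB_at: "DB T f \<Longrightarrow> \<bar>t\<bar> \<le> T \<Longrightarrow> \<exists>C. \<forall>x. norm (f t x) \<le> C/(1+x^2)"
  unfolding DB_def by blast

context sol begin

lemma DBs: "DB T a" "DB T aT" "DB T aX" "DB T b" "DB T bT" "DB T bX"
  using dec by (auto intro: DB_decays)

lemma DB_R: "DB T (RR a b)"
proof -
  have "DB T (\<lambda>t x. a t x * cnj (a t x) - b t x * cnj (b t x))" by (intro DB_add DB_diff DB_cmult DB_mult DB_cnj DBs)
  then show ?thesis by (simp add: RR_def[abs_def])
qed

lemma DB_J: "DB T J"
proof -
  have "DB T (\<lambda>t x. cnj (a t x) * bT t x - cnj (b t x) * aT t x - of_real \<gamma> * RR a b t x)"
    by (intro DB_add DB_diff DB_cmult DB_mult DB_cnj DBs DB_R)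
  then show ?thesis by (simp add: JJ_def[abs_def])
qed

lemma DB_h: "DB T h"
proof -
  have "DB T (\<lambda>t x. cnj (a t x) * bX t x - cnj (b t x) * aX t x + of_real m * RR a b t x
      - of_real (g / (real k + 1)) * RR a b t x ^ (k + 1))"
    by (intro DB_add DB_diff DB_cmult DB_mult DB_cnj DB_pow DBs DB_R)
  then show ?thesis by (simp add: hh_def[abs_def])
qed

lemma DB_K: "DB T (KK a b)"
proof -
  have "DB T (\<lambda>t x. cnj (a t x) * b t x - a t x * cnj (b t x))" by (intro DB_add DB_diff DB_cmult DB_mult DB_cnj DBs)
  then show ?thesis by (simp add: KK_def[abs_def])
qed

lemma DB_KX: "DB T (KX a b aX bX)"
proof -
  have "DB T (\<lambda>t x. cnj (aX t x) * b t x + cnj (a t x) * bX t x - (aX t x * cnj (b t x) + a t x * cnj (bX t x)))"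
    by (intro DB_add DB_diff DB_cmult DB_mult DB_cnj DBs)
  then show ?thesis by (simp add: KX_def[abs_def])
qed

lemma cR: "continuous_on UNIV (\<lambda>z. RR a b (fst z) (snd z))"
  unfolding RR_def by (intro continuous_intros ca cb)

lemma ch: "continuous_on UNIV (\<lambda>z. h (fst z) (snd z))"
  unfolding hh_def by (intro continuous_intros ca cb caX cbX cR)

lemma cJ: "continuous_on UNIV (\<lambda>z. J (fst z) (snd z))"
  unfolding JJ_def by (intro continuous_intros ca cb caT cbT cR)

lemma cH: "continuous_on UNIV (\<lambda>z. H (fst z) (snd z))"
  unfolding hd_def D2_def by (intro continuous_intros ca cb caT cbT caX cbX caM cbM cR)

lemma cKX: "continuous_on UNIV (\<lambda>z. KX a b aX bX (fst z) (snd z))"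
  unfolding KX_def by (intro continuous_intros ca cb caX cbX)

lemma dK_x: "((\<lambda>y. KK a b t y) has_vector_derivative KX a b aX bX t x) (at x)"
  unfolding KK_def KX_def
  apply (rule has_vector_derivative_eq_rhs)
   apply (rule derivative_eq_intros da_x db_x refl)+
  by (simp add: algebra_simps)

lemma h_cnj: "h t x - cnj (h t x) = KX a b aX bX t x"
  by (simp add: hh_def KX_def algebra_simps)

end

context sol begin

lemma h_bound: "\<exists>C. \<forall>x. norm (h t x) \<le> C/(1+x^2)"
  using DB_at[OF DB_h[of "\<bar>t\<bar>"]] by auto

lemma h_int: "h t integrable_on UNIV"
  using h_bound[of t] dec_int[OF jc_x[OF ch]] by blast

lemma real_I: "cnj (integral UNIV (h t)) = integral UNIV (h t)"
proof -
  define I where "I = integral UNIV (h t)"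
  have hi: "(h t has_integral I) UNIV" unfolding I_def using h_int by blast
  have "(cnj \<circ> h t has_integral cnj I) UNIV" using has_integral_cnj hi by blast
  then have ci: "((\<lambda>x. cnj (h t x)) has_integral cnj I) UNIV" by (simp add: comp_def)
  have "((\<lambda>x. h t x - cnj (h t x)) has_integral (I - cnj I)) UNIV"
    by (rule has_integral_diff[OF hi ci])
  then have ki: "(KX a b aX bX t has_integral (I - cnj I)) UNIV"
    by (simp add: h_cnj)
  obtain C1 where C1: "\<And>x. norm (KX a b aX bX t x) \<le> C1/(1+x^2)"
    using DB_at[OF DB_KX[of "\<bar>t\<bar>"]] by auto
  obtain C2 where C2: "\<And>x. norm (KK a b t x) \<le> C2/(1+x^2)"
    using DB_at[OF DB_K[of "\<bar>t\<bar>"]] by auto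
  have "integral UNIV (KX a b aX bX t) = 0"
    by (rule int_deriv_zero[OF dK_x jc_x[OF cKX] C1 C2])
  with ki have "I - cnj I = 0" using integral_unique by metis
  then show ?thesis unfolding I_def by simp
qed

lemma const_I:
  assumes st: "s \<le> t"
  shows "integral UNIV (h t) = integral UNIV (h s)"
proof -
  define T where "T = max \<bar>s\<bar> \<bar>t\<bar>"
  obtain CJ where CJ: "\<And>\<tau> x. \<bar>\<tau>\<bar> \<le> T \<Longrightarrow> norm (J \<tau> x) \<le> CJ/(1+x^2)"
    using DB_J[of T] unfolding DB_def by blast
  obtain Ct where Ct: "\<And>x. norm (h t x) \<le> Ct/(1+x^2)" using h_bound by blast
  obtain Cs where Cs: "\<And>x. norm (h s x) \<le> Cs/(1+x^2)" using h_bound by blast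
  define sq where "sq n = integral {-real n..real n} (h t) - integral {-real n..real n} (h s)" for n
  have L1: "sq \<longlonglongrightarrow> integral UNIV (h t) - integral UNIV (h s)"
    unfolding sq_def by (intro tendsto_diff dec_lim[OF h_int Ct] dec_lim[OF h_int Cs])
  have eq: "sq n = integral {s..t} (\<lambda>\<tau>. J \<tau> (real n) - J \<tau> (- real n))" for n
  proof -
    define R where "R = real n"
    have R0: "-R \<le> R" by (simp add: R_def)
    have "sq n = integral {-R..R} (\<lambda>x. h t x - h s x)"
      unfolding sq_def R_def
      by (intro integral_diff[symmetric] integrable_continuous_interval jc_x[OF ch])
    also have "\<dots> = integral {-R..R} (\<lambda>x. integral {s..t} (\<lambda>\<tau>. H \<tau> x))"
      by (intro integral_cong integral_unique[symmetric] ftc[OF st dh_t])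
    also have "\<dots> = integral {s..t} (\<lambda>\<tau>. integral {-R..R} (\<lambda>x. H \<tau> x))"
      using integral_swap_continuous[where f="\<lambda>x \<tau>. H \<tau> x" and a="-R" and c=s and b=R and d=t, OF jc_swap[OF cH]]
      by (simp add: cbox_interval)
    also have "\<dots> = integral {s..t} (\<lambda>\<tau>. J \<tau> R - J \<tau> (-R))"
      by (intro integral_cong integral_unique ftc[OF R0 dJ_x])
    finally show ?thesis by (simp add: R_def)
  qed
  have bnd: "norm (sq n) \<le> (2*CJ*(t-s))/(1+(real n)^2)" for n
  proof -
    have "norm (integral {s..t} (\<lambda>\<tau>. J \<tau> (real n) - J \<tau> (- real n))) \<le> (CJ/(1+(real n)^2) + CJ/(1+(real n)^2)) * (t - s)"
    proof (rule integral_bound[OF st])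
      show "continuous_on {s..t} (\<lambda>\<tau>. J \<tau> (real n) - J \<tau> (- real n))"
        by (intro continuous_intros jc_t[OF cJ])
      fix \<tau> assume "\<tau> \<in> {s..t}"
      then have "\<bar>\<tau>\<bar> \<le> T" by (auto simp: T_def)
      then have "norm (J \<tau> (real n)) \<le> CJ/(1+(real n)^2)" "norm (J \<tau> (- real n)) \<le> CJ/(1+(real n)^2)"
        using CJ[of \<tau> "real n"] CJ[of \<tau> "- real n"] by auto
      then show "norm (J \<tau> (real n) - J \<tau> (- real n)) \<le> CJ/(1+(real n)^2) + CJ/(1+(real n)^2)"
        using norm_triangle_le_diff add_mono by blast
    qed
    then show ?thesis by (simp add: eq field_simps)
  qed
  have L2: "sq \<longlonglongrightarrow> 0"
  proof (rule Lim_null_comparison)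
    show "\<forall>\<^sub>F n in sequentially. norm (sq n) \<le> (2*CJ*(t-s))/(1+(real n)^2)"
      using bnd by simp
    show "(\<lambda>n. (2*CJ*(t-s))/(1+(real n)^2)) \<longlonglongrightarrow> 0" by real_asymp
  qed
  from LIMSEQ_unique[OF L1 L2] show ?thesis by simp
qed

lemma const_I': "integral UNIV (h t) = integral UNIV (h s)"
  using const_I[of s t] const_I[of t s] by (cases "s \<le> t") auto

end

lemma rho_RR: "complex_of_real (rho p1 p2 t x) = RR p1 p2 t x"
  by (simp only: rho_def RR_def of_real_diff complex_norm_square)

theorem mainTheorem8:
  fixes m g \<gamma> :: real and k :: nat and \<psi>1 \<psi>2 :: "real \<Rightarrow> real \<Rightarrow> complex"
  assumes "m > 0" and "g > 0"
    and "smooth_decaying \<psi>1" and "smooth_decaying \<psi>2"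
    and "soler_PT_solution m g k \<gamma> \<psi>1 \<psi>2"
  shows "\<forall>t. Im (soler_energy m g k \<psi>1 \<psi>2 t) = 0
             \<and> ((soler_energy m g k \<psi>1 \<psi>2) has_vector_derivative 0) (at t)"
proof -
  obtain uT uX uTT uTX uXT uXX where
    a1: "\<forall>t x. ((\<lambda>s. \<psi>1 s x) has_vector_derivative uT t x) (at t)" and
    a2: "\<forall>t x. ((\<lambda>y. \<psi>1 t y) has_vector_derivative uX t x) (at x)" and
    a4: "\<forall>t x. ((\<lambda>y. uT t y) has_vector_derivative uTX t x) (at x)" and
    a5: "\<forall>t x. ((\<lambda>s. uX s x) has_vector_derivative uXT t x) (at t)" and
    a7: "\<forall>v\<in>{\<psi>1, uT, uX, uTT, uTX, uXT, uXX}. jcont v \<and> decays v"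
    using assms(3) unfolding smooth_decaying_def by blast
  obtain bt bx btt btx bxt bxx where
    b1: "\<forall>t x. ((\<lambda>s. \<psi>2 s x) has_vector_derivative bt t x) (at t)" and
    b2: "\<forall>t x. ((\<lambda>y. \<psi>2 t y) has_vector_derivative bx t x) (at x)" and
    b4: "\<forall>t x. ((\<lambda>y. bt t y) has_vector_derivative btx t x) (at x)" and
    b5: "\<forall>t x. ((\<lambda>s. bx s x) has_vector_derivative bxt t x) (at t)" and
    b7: "\<forall>v\<in>{\<psi>2, bt, bx, btt, btx, bxt, bxx}. jcont v \<and> decays v"
    using assms(4) unfolding smooth_decaying_def by blast
  have ca: "jcont \<psi>1" "jcont uT" "jcont uX" "jcont uTX" "jcont uXT" using a7 by auto
  have cb: "jcont \<psi>2" "jcont bt" "jcont bx" "jcont btx" "jcont bxt" using b7 by auto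
  have cla: "uXT t x = uTX t x" for t x
    by (rule clairaut[OF a1[rule_format] a2[rule_format] a4[rule_format] a5[rule_format]])
       (use ca in \<open>auto simp: jcont_def\<close>)
  have clb: "bxt t x = btx t x" for t x
    by (rule clairaut[OF b1[rule_format] b2[rule_format] b4[rule_format] b5[rule_format]])
       (use cb in \<open>auto simp: jcont_def\<close>)
  have a4': "\<And>t x. ((\<lambda>y. uT t y) has_vector_derivative uXT t x) (at x)" using a4 cla by simp
  have b4': "\<And>t x. ((\<lambda>y. bt t y) has_vector_derivative bxt t x) (at x)" using b4 clb by simp
  have dt1: "dt \<psi>1 t x = uT t x" for t x using a1 by (simp add: dt_def vector_derivative_at)
  have dt2: "dt \<psi>2 t x = bt t x" for t x using b1 by (simp add: dt_def vector_derivative_at)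
  have dx1: "dx \<psi>1 t x = uX t x" for t x using a2 by (simp add: dx_def vector_derivative_at)
  have dx2: "dx \<psi>2 t x = bx t x" for t x using b2 by (simp add: dx_def vector_derivative_at)
  have ofr: "complex_of_real (g * rho \<psi>1 \<psi>2 t x ^ k) = of_real g * RR \<psi>1 \<psi>2 t x ^ k" for t x
    by (simp add: rho_RR[symmetric])
  interpret S: sol m g \<gamma> k \<psi>1 uT uX uXT \<psi>2 bt bx bxt
  proof
    show "\<And>t x. \<i> * uT t x = bx t x - of_real g * RR \<psi>1 \<psi>2 t x ^ k * \<psi>1 t x + of_real m * \<psi>1 t x + \<i> * of_real \<gamma> * \<psi>2 t x"
      using assms(5) unfolding soler_PT_solution_def of_real_mult of_real_power rho_RR dt1 dx2 by blast
    show "\<And>t x. \<i> * bt t x = - uX t x + of_real g * RR \<psi>1 \<psi>2 t x ^ k * \<psi>2 t x - of_real m * \<psi>2 t x + \<i> * of_real \<gamma> * \<psi>1 t x"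
      using assms(5) unfolding soler_PT_solution_def of_real_mult of_real_power rho_RR dt2 dx1 by blast
  qed (use a1 a2 a4' a5 b1 b2 b4' b5 ca cb a7 b7 in \<open>auto simp: jcont_def\<close>)
  have EE: "soler_energy m g k \<psi>1 \<psi>2 t = 1/2 * integral UNIV (hh m g k \<psi>1 \<psi>2 uX bx t)" for t
  proof -
    have "(\<lambda>x. cnj (\<psi>1 t x) * dx \<psi>2 t x - cnj (\<psi>2 t x) * dx \<psi>1 t x
        + of_real (m * rho \<psi>1 \<psi>2 t x) - of_real (g / (real k + 1) * (rho \<psi>1 \<psi>2 t x) ^ (k + 1)))
        = hh m g k \<psi>1 \<psi>2 uX bx t"
      unfolding hh_def of_real_mult of_real_power rho_RR dx1 dx2 by (rule refl)
    then show ?thesis by (simp add: soler_energy_def)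
  qed
  have const: "soler_energy m g k \<psi>1 \<psi>2 = (\<lambda>t. soler_energy m g k \<psi>1 \<psi>2 0)"
  proof (rule ext)
    fix t
    show "soler_energy m g k \<psi>1 \<psi>2 t = soler_energy m g k \<psi>1 \<psi>2 0"
      unfolding EE using S.const_I'[of t 0] by (rule arg_cong)
  qed
  show ?thesis
  proof (intro allI conjI)
    fix t
    have "cnj (integral UNIV (hh m g k \<psi>1 \<psi>2 uX bx t)) = integral UNIV (hh m g k \<psi>1 \<psi>2 uX bx t)"
      by (rule S.real_I)
    then have "Im (integral UNIV (hh m g k \<psi>1 \<psi>2 uX bx t)) = 0"
      by (metis Reals_cnj_iff complex_is_Real_iff)
    then show "Im (soler_energy m g k \<psi>1 \<psi>2 t) = 0" by (simp add: EE)
    show "(soler_energy m g k \<psi>1 \<psi>2 has_vector_derivative 0) (at t)"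
      by (subst const) (rule has_vector_derivative_const)
  qed
qed

end
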